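(* Let $n\ge 2$ and let $R$ be the complex Leibniz algebra with basis $\{h,e_1,\dots,e_n\}$ and nonzero products $[e_i,e_1]=e_{i+1}$ ($1\le i\le n-1$), $[h,e_1]=-e_1$, $[e_i,h]=ie_i$ ($1\le i\le n$). A linear map $D:R\to R$ is an anti-derivation iff there exist $\beta_1,\dots,\beta_{n+1}\in\mathbb C$ such that $$D(h)=\sum_{i=1}^{n-1}i\beta_{i+1}e_i+\beta_{n+1}e_n,\qquad D(e_1)=\sum_{i=1}^n\beta_ie_i,\qquad D(e_i)=0\ (2\le i\le n).$$
   Context: Leibniz algebras are right Leibniz over $\mathbb C$: $[x,[y,z]]=[[x,y],z]-[[x,z],y]$. Unlisted products are zero. An anti-derivation is a linear map $D$ with $D([x,y])=[D(x),y]-[D(y),x]$ for all $x,y$. *)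

theory Defs
  imports Complex_Main "HOL-Library.Function_Algebras"
begin

text \<open>The Leibniz algebra R (dimension n+1 over the complex numbers).
 Elements are coordinate vectors v :: nat => complex supported on {0..n};
 index 0 is h, index i (1 <= i <= n) is e_i.\<close>

definition carrierR :: "nat \<Rightarrow> (nat \<Rightarrow> complex) set" where
  "carrierR n = {v. \<forall>k>n. v k = 0}"

definition bv :: "nat \<Rightarrow> nat \<Rightarrow> complex" where
  "bv i = (\<lambda>k. if k = i then 1 else 0)"

definition vsc :: "complex \<Rightarrow> (nat \<Rightarrow> complex) \<Rightarrow> nat \<Rightarrow> complex" where
  "vsc c v = (\<lambda>k. c * v k)"

definition bprod :: "nat \<Rightarrow> nat \<Rightarrow> nat \<Rightarrow> nat \<Rightarrow> complex" where
  "bprod n i j =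
     (if 1 \<le> i \<and> i \<le> n - 1 \<and> j = 1 then bv (i + 1)
      else if i = 0 \<and> j = 1 then vsc (-1) (bv 1)
      else if 1 \<le> i \<and> i \<le> n \<and> j = 0 then vsc (of_nat i) (bv i)
      else (\<lambda>k. 0))"

definition brR :: "nat \<Rightarrow> (nat \<Rightarrow> complex) \<Rightarrow> (nat \<Rightarrow> complex) \<Rightarrow> nat \<Rightarrow> complex" where
  "brR n x y = (\<Sum>i\<le>n. \<Sum>j\<le>n. vsc (x i * y j) (bprod n i j))"

definition linear_on_R :: "nat \<Rightarrow> ((nat \<Rightarrow> complex) \<Rightarrow> nat \<Rightarrow> complex) \<Rightarrow> bool" where
  "linear_on_R n D \<longleftrightarrow>
     (\<forall>x\<in>carrierR n. D x \<in> carrierR n) \<and>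
     (\<forall>x\<in>carrierR n. \<forall>y\<in>carrierR n. D (x + y) = D x + D y) \<and>
     (\<forall>c. \<forall>x\<in>carrierR n. D (vsc c x) = vsc c (D x))"

definition anti_derivation :: "nat \<Rightarrow> ((nat \<Rightarrow> complex) \<Rightarrow> nat \<Rightarrow> complex) \<Rightarrow> bool" where
  "anti_derivation n D \<longleftrightarrow>
     (\<forall>x\<in>carrierR n. \<forall>y\<in>carrierR n.
        D (brR n x y) = brR n (D x) y - brR n (D y) x)"

end

theory Submission
  imports Defs
begin

lemma sum_app: "(sum f A) k = (\<Sum>i\<in>A. f i k)" for f :: "'b \<Rightarrow> nat \<Rightarrow> complex"
  by (induction A rule: infinite_finite_induct) auto

lemma sum_one: "finite S \<Longrightarrow> a \<in> S \<Longrightarrow> (\<And>i. i \<in> S \<Longrightarrow> i \<noteq> a \<Longrightarrow> f i = 0) \<Longrightarrow> sum f S = (f a :: complex)"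
  by (subst sum.remove[of S a]) (auto intro!: sum.neutral)

lemma sum_zero: "(\<And>i. i \<in> S \<Longrightarrow> f i = 0) \<Longrightarrow> sum f S = (0 :: complex)"
  by (auto intro!: sum.neutral)

lemma bprod_apply: "bprod n i j k =
  (if j = 1 \<and> 1 \<le> i \<and> i \<le> n - 1 \<and> k = i + 1 then 1 else 0) +
  (if j = 1 \<and> i = 0 \<and> k = 1 then -1 else 0) +
  (if j = 0 \<and> 1 \<le> i \<and> i \<le> n \<and> k = i then of_nat i else 0)"
  by (auto simp: bprod_def bv_def vsc_def)

lemma inner: assumes "n \<ge> 1"
  shows "(\<Sum>j\<le>n. x i * y j * bprod n i j k) = x i * y 1 * bprod n i 1 k + x i * y 0 * bprod n i 0 k"
proof -
  have "(\<Sum>j\<le>n. x i * y j * bprod n i j k) = (\<Sum>j\<in>{0,1}. x i * y j * bprod n i j k)"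
    using assms by (intro sum.mono_neutral_right) (auto simp: bprod_apply)
  then show ?thesis by simp
qed

lemma brR_apply:
  assumes "n \<ge> 1"
  shows "brR n x y k = (if k = 1 then x 1 * y 0 - x 0 * y 1
     else if 2 \<le> k \<and> k \<le> n then x (k-1) * y 1 + of_nat k * x k * y 0 else 0)" (is "_ = ?R")
proof -
  have "brR n x y k = (\<Sum>i\<le>n. \<Sum>j\<le>n. x i * y j * bprod n i j k)"
    by (simp add: brR_def sum_app vsc_def)
  also have "\<dots> = (\<Sum>i\<le>n. x i * y 1 * bprod n i 1 k) + (\<Sum>i\<le>n. x i * y 0 * bprod n i 0 k)"
    using assms by (simp add: inner sum.distrib)
  also have "\<dots> = ?R"
  proof (cases "k = 1")
    case True
    have "(\<Sum>i\<le>n. x i * y 1 * bprod n i 1 k) = - x 0 * y 1"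
      by (subst sum_one[where a=0]) (auto simp: bprod_apply True)
    moreover have "(\<Sum>i\<le>n. x i * y 0 * bprod n i 0 k) = x 1 * y 0"
      using assms by (subst sum_one[where a=1]) (auto simp: bprod_apply True)
    ultimately show ?thesis using True by simp
  next
    case k1: False
    show ?thesis
    proof (cases "2 \<le> k \<and> k \<le> n")
      case True
      have "(\<Sum>i\<le>n. x i * y 1 * bprod n i 1 k) = x (k-1) * y 1"
        using True by (subst sum_one[where a="k-1"]) (auto simp: bprod_apply)
      moreover have "(\<Sum>i\<le>n. x i * y 0 * bprod n i 0 k) = of_nat k * x k * y 0"
        using True by (subst sum_one[where a=k]) (auto simp: bprod_apply)
      ultimately show ?thesis using True k1 by simp
    next
      case False
      have "(\<Sum>i\<le>n. x i * y 1 * bprod n i 1 k) = 0"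
        using False k1 by (intro sum_zero) (auto simp: bprod_apply)
      moreover have "(\<Sum>i\<le>n. x i * y 0 * bprod n i 0 k) = 0"
        using False k1 by (intro sum_zero) (auto simp: bprod_apply)
      ultimately show ?thesis using False k1 by auto
    qed
  qed
  finally show ?thesis .
qed
lemma sum_vsc_bv: "finite S \<Longrightarrow> (\<Sum>i\<in>S. vsc (c i) (bv i)) k = (if k \<in> S then c k else 0)"
proof -
  assume f: "finite S"
  have "(\<Sum>i\<in>S. vsc (c i) (bv i)) k = (\<Sum>i\<in>S. if k = i then c i else 0)"
    by (simp add: sum_app vsc_def bv_def if_distrib[of "\<lambda>z. c _ * z"] cong: if_cong)
  also have "\<dots> = (if k \<in> S then c k else 0)" using f by (simp add: sum.delta)
  finally show ?thesis .
qed

lemma vsc_in: "v \<in> carrierR n \<Longrightarrow> vsc c v \<in> carrierR n"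
  by (simp add: carrierR_def vsc_def)

lemma bv_in: "i \<le> n \<Longrightarrow> bv i \<in> carrierR n"
  by (simp add: carrierR_def bv_def)

lemma sum_in: "(\<And>i. i \<in> S \<Longrightarrow> v i \<in> carrierR n) \<Longrightarrow> sum v S \<in> carrierR n"
  by (induction S rule: infinite_finite_induct) (auto simp: carrierR_def)

lemma D_zero: assumes "linear_on_R n D" shows "D (\<lambda>k. 0) = (\<lambda>k. 0)"
proof -
  have z: "(\<lambda>k. 0::complex) \<in> carrierR n" by (simp add: carrierR_def)
  have "vsc 0 (\<lambda>k. 0) = (\<lambda>k. 0::complex)" by (simp add: vsc_def)
  then have "D (\<lambda>k. 0) = D (vsc 0 (\<lambda>k. 0))" by simp
  also have "\<dots> = vsc 0 (D (\<lambda>k. 0))" using assms z unfolding linear_on_R_def by blast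
  finally show ?thesis by (simp add: vsc_def)
qed

lemma D_sum: assumes "linear_on_R n D" "finite S" "\<And>i. i \<in> S \<Longrightarrow> v i \<in> carrierR n"
  shows "D (sum v S) = (\<Sum>i\<in>S. D (v i))"
  using assms(2,3)
proof (induction S rule: finite_induct)
  case empty
  then show ?case using D_zero[OF assms(1)] by (simp add: zero_fun_def)
next
  case (insert a F)
  have "D (sum v (insert a F)) = D (v a + sum v F)" using insert by simp
  also have "\<dots> = D (v a) + D (sum v F)"
    using assms(1) insert sum_in[of F v n] unfolding linear_on_R_def by auto
  also have "\<dots> = D (v a) + (\<Sum>i\<in>F. D (v i))" using insert by simp
  also have "\<dots> = (\<Sum>i\<in>insert a F. D (v i))" using insert(1,2) by (rule sum.insert[symmetric])
  finally show ?case .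
qed

lemma expand: "x \<in> carrierR n \<Longrightarrow> x = (\<Sum>i\<le>n. vsc (x i) (bv i))"
  by (rule ext) (auto simp: sum_vsc_bv carrierR_def)

lemma D_apply: assumes "linear_on_R n D" "x \<in> carrierR n"
  shows "D x k = (\<Sum>i\<le>n. x i * D (bv i) k)"
proof -
  have "D x = D (\<Sum>i\<le>n. vsc (x i) (bv i))" using expand[OF assms(2)] by simp
  also have "\<dots> = (\<Sum>i\<le>n. D (vsc (x i) (bv i)))"
    by (rule D_sum[OF assms(1)]) (auto intro: vsc_in bv_in)
  also have "\<dots> = (\<Sum>i\<le>n. vsc (x i) (D (bv i)))"
    using assms(1) bv_in unfolding linear_on_R_def by (intro sum.cong) auto
  finally show ?thesis by (simp add: sum_app vsc_def)
qed

lemma brR_in: "n \<ge> 1 \<Longrightarrow> brR n x y \<in> carrierR n"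
  by (auto simp: carrierR_def brR_apply)

lemma brR_zero_left: "n \<ge> 1 \<Longrightarrow> brR n (\<lambda>k. 0) y = (\<lambda>k. 0)"
  by (rule ext) (simp add: brR_apply)

lemma brR_bv_right: "n \<ge> 1 \<Longrightarrow> i \<ge> 2 \<Longrightarrow> brR n x (bv i) = (\<lambda>k. 0)"
  by (rule ext) (simp add: brR_apply bv_def)

lemma brR_bv_e1: "n \<ge> 1 \<Longrightarrow> 1 \<le> i \<Longrightarrow> i < n \<Longrightarrow> brR n (bv i) (bv 1) = bv (i+1)"
  by (rule ext) (auto simp: brR_apply bv_def)

lemma brR_bv_e1h: "n \<ge> 1 \<Longrightarrow> brR n (bv 1) (bv 0) = bv 1"
  by (rule ext) (auto simp: brR_apply bv_def)

theorem mainTheorem7: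
  fixes n :: nat and D :: "(nat \<Rightarrow> complex) \<Rightarrow> nat \<Rightarrow> complex"
  assumes "n \<ge> 2" and "linear_on_R n D"
  shows "anti_derivation n D \<longleftrightarrow>
    (\<exists>\<beta> :: nat \<Rightarrow> complex.
       D (bv 0) = (\<Sum>i=1..n-1. vsc (of_nat i * \<beta> (i + 1)) (bv i)) + vsc (\<beta> (n + 1)) (bv n) \<and>
       D (bv 1) = (\<Sum>i=1..n. vsc (\<beta> i) (bv i)) \<and>
       (\<forall>i. 2 \<le> i \<and> i \<le> n \<longrightarrow> D (bv i) = (\<lambda>k. 0)))"
proof
  have n1: "n \<ge> 1" using assms(1) by simp
  have Dc: "\<And>x. x \<in> carrierR n \<Longrightarrow> D x \<in> carrierR n" using assms(2) unfolding linear_on_R_def by blast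
  assume AD: "anti_derivation n D"
  have ad: "D (brR n (bv i) (bv j)) = brR n (D (bv i)) (bv j) - brR n (D (bv j)) (bv i)"
    if "i \<le> n" "j \<le> n" for i j
    using AD bv_in that unfolding anti_derivation_def by blast
  have hi: "D (bv (m+2)) = (\<lambda>k. 0)" if "m + 2 \<le> n" for m
    using that
  proof (induction m)
    case 0
    have "D (bv 2) = D (brR n (bv 1) (bv 1))" using brR_bv_e1[OF n1, of 1] assms(1) by (simp add: numeral_2_eq_2)
    also have "\<dots> = (\<lambda>k. 0)" using ad[of 1 1] n1 by (simp add: fun_eq_iff)
    finally show ?case by (simp add: numeral_2_eq_2)
  next
    case (Suc m)
    have "D (bv (Suc m + 2)) = D (brR n (bv (m+2)) (bv 1))" using brR_bv_e1[OF n1, of "m+2"] Suc by simp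
    also have "\<dots> = brR n (D (bv (m+2))) (bv 1) - brR n (D (bv 1)) (bv (m+2))"
      using ad[of "m+2" 1] Suc by simp
    also have "\<dots> = (\<lambda>k. 0)"
    proof -
      have z: "D (bv (m+2)) = (\<lambda>k. 0)" using Suc by simp
      have z2: "brR n (D (bv 1)) (bv (m+2)) = (\<lambda>k. 0)" by (rule brR_bv_right[OF n1]) simp
      show ?thesis unfolding z z2 brR_zero_left[OF n1] by (simp add: fun_eq_iff)
    qed
    finally show ?case .
  qed
  define a0 where "a0 = D (bv 0)"
  define a1 where "a1 = D (bv 1)"
  have E: "a1 = brR n a1 (bv 0) - brR n a0 (bv 1)"
    using ad[of 1 0] brR_bv_e1h[OF n1] n1 unfolding a0_def a1_def by simp
  have Ek: "a1 k = brR n a1 (bv 0) k - brR n a0 (bv 1) k" for k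
    using fun_cong[OF E, of k] by simp
  have c0: "a0 \<in> carrierR n" "a1 \<in> carrierR n" unfolding a0_def a1_def using Dc bv_in n1 by auto
  have a00: "a0 0 = 0" using Ek[of 1] by (simp add: brR_apply[OF n1] bv_def)
  have a1k: "a0 k = of_nat k * a1 (k+1)" if "1 \<le> k" "k < n" for k
    using Ek[of "k+1"] that n1 by (simp add: brR_apply[OF n1] bv_def algebra_simps)
  define \<beta> where "\<beta> = (\<lambda>i. if i = n+1 then a0 n else a1 i)"
  show "\<exists>\<beta> :: nat \<Rightarrow> complex.
       D (bv 0) = (\<Sum>i=1..n-1. vsc (of_nat i * \<beta> (i + 1)) (bv i)) + vsc (\<beta> (n + 1)) (bv n) \<and>
       D (bv 1) = (\<Sum>i=1..n. vsc (\<beta> i) (bv i)) \<and>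
       (\<forall>i. 2 \<le> i \<and> i \<le> n \<longrightarrow> D (bv i) = (\<lambda>k. 0))"
  proof (intro exI[of _ \<beta>] conjI allI impI)
    show "D (bv 0) = (\<Sum>i=1..n-1. vsc (of_nat i * \<beta> (i + 1)) (bv i)) + vsc (\<beta> (n + 1)) (bv n)"
    proof (rule ext)
      fix k
      show "D (bv 0) k = ((\<Sum>i=1..n-1. vsc (of_nat i * \<beta> (i + 1)) (bv i)) + vsc (\<beta> (n + 1)) (bv n)) k"
        using a00 a1k[of k] c0 unfolding a0_def[symmetric]
        apply (simp only: plus_fun_apply sum_vsc_bv[OF finite_atLeastAtMost])
        by (cases "k = 0") (auto simp: vsc_def bv_def \<beta>_def carrierR_def)
    qed
    show "D (bv 1) = (\<Sum>i=1..n. vsc (\<beta> i) (bv i))"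
    proof (rule ext)
      fix k
      have "a1 0 = 0" using Ek[of 0] by (simp add: brR_apply[OF n1])
      then show "D (bv 1) k = (\<Sum>i=1..n. vsc (\<beta> i) (bv i)) k"
        using c0 unfolding a1_def[symmetric]
        by (cases "k = 0") (auto simp: sum_vsc_bv \<beta>_def carrierR_def)
    qed
    fix i assume "2 \<le> i \<and> i \<le> n"
    then have ii: "i = (i - 2) + 2" and "(i - 2) + 2 \<le> n" by auto
    then show "D (bv i) = (\<lambda>k. 0)" using hi[of "i-2"] by (metis ii)
  qed
next
  have n1: "n \<ge> 1" using assms(1) by simp
  assume "\<exists>\<beta> :: nat \<Rightarrow> complex.
       D (bv 0) = (\<Sum>i=1..n-1. vsc (of_nat i * \<beta> (i + 1)) (bv i)) + vsc (\<beta> (n + 1)) (bv n) \<and>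
       D (bv 1) = (\<Sum>i=1..n. vsc (\<beta> i) (bv i)) \<and>
       (\<forall>i. 2 \<le> i \<and> i \<le> n \<longrightarrow> D (bv i) = (\<lambda>k. 0))"
  then obtain \<beta> :: "nat \<Rightarrow> complex" where
    h0: "D (bv 0) = (\<Sum>i=1..n-1. vsc (of_nat i * \<beta> (i + 1)) (bv i)) + vsc (\<beta> (n + 1)) (bv n)" and
    h1: "D (bv 1) = (\<Sum>i=1..n. vsc (\<beta> i) (bv i))" and
    hi: "\<And>i. 2 \<le> i \<Longrightarrow> i \<le> n \<Longrightarrow> D (bv i) = (\<lambda>k. 0)" by blast
  define A0 where "A0 k = (if 1 \<le> k \<and> k \<le> n - 1 then of_nat k * \<beta> (k+1) else if k = n then \<beta> (n+1) else 0)" for k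
  define A1 where "A1 k = (if 1 \<le> k \<and> k \<le> n then \<beta> k else 0)" for k
  have D0: "D (bv 0) k = A0 k" for k
    unfolding h0 A0_def
    apply (simp only: plus_fun_apply sum_vsc_bv[OF finite_atLeastAtMost])
    using n1 by (auto simp: vsc_def bv_def)
  have D1: "D (bv 1) k = A1 k" for k
    unfolding h1 A1_def by (simp only: sum_vsc_bv[OF finite_atLeastAtMost]) auto
  have Dx: "D x k = x 0 * A0 k + x 1 * A1 k" if "x \<in> carrierR n" for x k
  proof -
    have "D x k = (\<Sum>i\<le>n. x i * D (bv i) k)" by (rule D_apply[OF assms(2) that])
    also have "\<dots> = (\<Sum>i\<in>{0,1}. x i * D (bv i) k)"
      using n1 hi by (intro sum.mono_neutral_right) auto
    also have "\<dots> = x 0 * A0 k + x 1 * A1 k" using D0 D1[simplified] by simp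
    finally show ?thesis .
  qed
  show "anti_derivation n D"
    unfolding anti_derivation_def
  proof (intro ballI ext)
    fix x y k assume x: "x \<in> carrierR n" and y: "y \<in> carrierR n"
    have L: "D (brR n x y) k = (x 1 * y 0 - x 0 * y 1) * A1 k"
      using Dx[OF brR_in[OF n1]] by (simp add: brR_apply[OF n1])
    show "D (brR n x y) k = (brR n (D x) y - brR n (D y) x) k"
    proof (cases "k = 1")
      case True
      then show ?thesis using L n1 by (simp add: brR_apply[OF n1] Dx x y A0_def A1_def algebra_simps)
    next
      case k1: False
      show ?thesis
      proof (cases "2 \<le> k \<and> k \<le> n")
        case True
        have c: "1 \<le> k-1 \<and> k-1 \<le> n-1" using True by auto
        have c2: "k - 1 + 1 = k" using True by auto
        have "A0 (k-1) = of_nat (k-1) * \<beta> k" using c c2 unfolding A0_def by simp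
        moreover have "(of_nat (k-1) :: complex) = of_nat k - 1" using True by (simp add: of_nat_diff)
        ultimately have a: "A0 (k-1) = (of_nat k - 1) * \<beta> k" by simp
        have b: "A1 k = \<beta> k" using True by (simp add: A1_def)
        show ?thesis using L True k1 by (simp add: brR_apply[OF n1] Dx x y a[simplified] b algebra_simps)
      next
        case False
        then show ?thesis using L k1 by (auto simp: brR_apply[OF n1] A1_def)
      qed
    qed
  qed
qed

end
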